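(* Let $E$, $(s^1,s^0)$, $M$ be as in the context. (a) For every $z\in Z^2_{\mathrm{pt}}(E,M)$: $z^{\mathrm{std}}_M([m])=0$ and $z^{\mathrm{std}}_G(g[\bar g]^{-1},[\bar g])=0$ for all $m\in M_E$, $g\in G_E$. (b) $Z^2_{\mathrm{st}}(E,M)=\{z\in Z^2_{\mathrm{pt}}(E,M): z_M([m])=0\text{ and }z_G(g[\bar g]^{-1},[\bar g])=0\ \forall m\in M_E,g\in G_E\}$; in particular $z^{\mathrm{std}}$ is standard for every $z\in Z^2_{\mathrm{pt}}(E,M)$. (c) The inclusion $Z^2_{\mathrm{st}}(E,M)\to Z^2_{\mathrm{pt}}(E,M)$ and the map $z\mapsto z^{\mathrm{std}}$ induce mutually inverse isomorphisms between $H^2_{\mathrm{st}}(E,M)$ and $H^2_{\mathrm{pt}}(E,M)$; in particular $H^2(E,M)\cong H^2_{\mathrm{st}}(E,M)$.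
   Context: Let $\Pi_0$ be a group, $\Pi_1$ an abelian $\Pi_0$-module (multiplicative), $M$ an abelian $\Pi_0$-module. A crossed module extension $E$ of $\Pi_0$ with $\Pi_1$: crossed module $(G_E,M_E,\mu)$ (left action ${}^gm$, $\mu({}^gm)=g\mu(m)g^{-1}$, ${}^{\mu(n)}m=nmn^{-1}$) with monomorphism $\iota:\Pi_1\to M_E$ and epimorphism $\pi:G_E\to\Pi_0$, $\Pi_1\to M_E\to G_E\to\Pi_0$ exact, ${}^g\iota(k)=\iota(\pi(g)k)$. $\bar g:=\pi(g)$; $M$ is a $G_E$-module via $\pi$. A section system: $s^0:\Pi_0\to G_E$, $s^0(1)=1$, $\pi s^0=\mathrm{id}$; $s^1:\mu(M_E)\to M_E$, $s^1(1)=1$, $\mu s^1=\mathrm{id}$. Notation $[p]=s^0(p)$, $[x]=s^1(x)$ for $x\in\mu(M_E)$, $[m]=s^1(\mu(m))$ for $m\in M_E$. Cochains: $C^1(E,M)=\mathrm{Map}(G_E,M)$, $C^2(E,M)=\mathrm{Map}(M_E\times G_E\times G_E,M)$; $d$ on $C^1$: $(dc)(m,h,g)=c(\mu(m)h)-c(hg)+\bar h c(g)$; on $C^2$: $(dc)(p,n,k,m,h,g)=c(p,\mu(n)k,\mu(m)h)-c(pn,k,hg)+c(n\,{}^km,kh,g)-\bar k\cdot c(m,h,g)$; $H^2(E,M)$ is the resulting cohomology. Pointed: $c(1)=0$, resp. $c(1,1,1)=0$; $Z^2_{\mathrm{pt}}$, $B^2_{\mathrm{pt}}$ the pointed cocycles/coboundaries,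 $H^2_{\mathrm{pt}}=Z^2_{\mathrm{pt}}/B^2_{\mathrm{pt}}$. $c_M(m)=c(m,1,1)$, $c_G(h,g)=c(1,h,g)$, and for $m\in M_E$, $c_G(m,h):=c_G(\mu(m),h)$. For $z\in Z^2_{\mathrm{pt}}(E,M)$: $\sigma_z(g)=z([g[\bar g]^{-1}],[\bar g],1)$, $z^{\mathrm{std}}=z-d\sigma_z$; $z$ is standard if $z^{\mathrm{std}}=z$. $Z^2_{\mathrm{st}}(E,M)$ = standard pointed cocycles, $B^2_{\mathrm{st}}(E,M)=\{b\in B^2_{\mathrm{pt}}(E,M):b^{\mathrm{std}}=b\}$, $H^2_{\mathrm{st}}=Z^2_{\mathrm{st}}/B^2_{\mathrm{st}}$. *)

theory Defs
  imports "HOL-Algebra.Coset" "HOL-Library.Function_Algebras"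
begin

(* All groups are written additively (type class group_add, which does NOT assume
   commutativity); the abelian ones (Pi_1, M) are of class ab_group_add.
   Thus g + h stands for the product gh, 0 for 1, -g for g^{-1}. *)

definition grp_hom :: "('a::group_add \<Rightarrow> 'b::group_add) \<Rightarrow> bool" where
  "grp_hom f \<longleftrightarrow> (\<forall>x y. f (x + y) = f x + f y)"

definition aut_action :: "('a::group_add \<Rightarrow> 'b::group_add \<Rightarrow> 'b) \<Rightarrow> bool" where
  "aut_action a \<longleftrightarrow> (\<forall>x. a 0 x = x) \<and> (\<forall>p q x. a (p + q) x = a p (a q x))
      \<and> (\<forall>p x y. a p (x + y) = a p x + a p y)"

definition crossed_module :: "('g::group_add \<Rightarrow> 'n::group_add \<Rightarrow> 'n) \<Rightarrow> ('n \<Rightarrow> 'g) \<Rightarrow> bool" where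
  "crossed_module act \<mu> \<longleftrightarrow> aut_action act \<and> grp_hom \<mu>
      \<and> (\<forall>g m. \<mu> (act g m) = g + \<mu> m - g)
      \<and> (\<forall>m n. act (\<mu> n) m = n + m - n)"

definition crossed_module_ext ::
  "('p0::group_add \<Rightarrow> 'p1::ab_group_add \<Rightarrow> 'p1) \<Rightarrow> ('g::group_add \<Rightarrow> 'n::group_add \<Rightarrow> 'n)
     \<Rightarrow> ('n \<Rightarrow> 'g) \<Rightarrow> ('p1 \<Rightarrow> 'n) \<Rightarrow> ('g \<Rightarrow> 'p0) \<Rightarrow> bool" where
  "crossed_module_ext aP1 act \<mu> \<iota> \<pi> \<longleftrightarrow>
      aut_action aP1 \<and> crossed_module act \<mu>
      \<and> grp_hom \<iota> \<and> inj \<iota> \<and> grp_hom \<pi> \<and> surj \<pi>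
      \<and> range \<iota> = {m. \<mu> m = 0} \<and> range \<mu> = {g. \<pi> g = 0}
      \<and> (\<forall>g k. act g (\<iota> k) = \<iota> (aP1 (\<pi> g) k))"

definition section_system ::
  "('n::group_add \<Rightarrow> 'g::group_add) \<Rightarrow> ('g \<Rightarrow> 'p0::group_add) \<Rightarrow> ('p0 \<Rightarrow> 'g) \<Rightarrow> ('g \<Rightarrow> 'n) \<Rightarrow> bool" where
  "section_system \<mu> \<pi> s0 s1 \<longleftrightarrow> s0 0 = 0 \<and> (\<forall>p. \<pi> (s0 p) = p)
      \<and> s1 0 = 0 \<and> (\<forall>x \<in> range \<mu>. \<mu> (s1 x) = x)"

(* cochains: C^1(E,M) = Map(G_E, M), C^2(E,M) = Map(M_E x G_E x G_E, M) (curried),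
   C^3 for the target of d on C^2, arguments (p,n,k,m,h,g) *)
type_synonym ('g, 'm) C1 = "'g \<Rightarrow> 'm"
type_synonym ('n, 'g, 'm) C2 = "'n \<Rightarrow> 'g \<Rightarrow> 'g \<Rightarrow> 'm"
type_synonym ('n, 'g, 'm) C3 = "'n \<Rightarrow> 'n \<Rightarrow> 'g \<Rightarrow> 'n \<Rightarrow> 'g \<Rightarrow> 'g \<Rightarrow> 'm"

(* aM : action of Pi_0 on M; M is a G_E-module via pi *)
definition d1 ::
  "('n::group_add \<Rightarrow> 'g::group_add) \<Rightarrow> ('g \<Rightarrow> 'p0) \<Rightarrow> ('p0 \<Rightarrow> 'm::ab_group_add \<Rightarrow> 'm)
     \<Rightarrow> ('g, 'm) C1 \<Rightarrow> ('n, 'g, 'm) C2" where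
  "d1 \<mu> \<pi> aM c = (\<lambda>m h g. c (\<mu> m + h) - c (h + g) + aM (\<pi> h) (c g))"

definition d2 ::
  "('g::group_add \<Rightarrow> 'n::group_add \<Rightarrow> 'n) \<Rightarrow> ('n \<Rightarrow> 'g) \<Rightarrow> ('g \<Rightarrow> 'p0) \<Rightarrow> ('p0 \<Rightarrow> 'm::ab_group_add \<Rightarrow> 'm)
     \<Rightarrow> ('n, 'g, 'm) C2 \<Rightarrow> ('n, 'g, 'm) C3" where
  "d2 act \<mu> \<pi> aM c = (\<lambda>p n k m h g.
      c p (\<mu> n + k) (\<mu> m + h) - c (p + n) k (h + g) + c (n + act k m) (k + h) g
      - aM (\<pi> k) (c m h g))"

definition Z2 where "Z2 act \<mu> \<pi> aM = {c. d2 act \<mu> \<pi> aM c = 0}"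
definition B2 where "B2 \<mu> \<pi> aM = range (d1 \<mu> \<pi> aM)"

definition pointed2 :: "('n::group_add, 'g::group_add, 'm::ab_group_add) C2 \<Rightarrow> bool" where
  "pointed2 c \<longleftrightarrow> c 0 0 0 = 0"

definition Z2pt where "Z2pt act \<mu> \<pi> aM = {z \<in> Z2 act \<mu> \<pi> aM. pointed2 z}"
definition B2pt where "B2pt \<mu> \<pi> aM = {b \<in> B2 \<mu> \<pi> aM. pointed2 b}"

definition cM :: "('n::group_add, 'g::group_add, 'm::ab_group_add) C2 \<Rightarrow> 'n \<Rightarrow> 'm" where
  "cM c m = c m 0 0"
definition cG :: "('n::group_add, 'g::group_add, 'm::ab_group_add) C2 \<Rightarrow> 'g \<Rightarrow> 'g \<Rightarrow> 'm" where
  "cG c h g = c 0 h g"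

(* sigma_z(g) = z([g [gbar]^{-1}], [gbar], 1) *)
definition sigma ::
  "('g::group_add \<Rightarrow> 'p0::group_add) \<Rightarrow> ('p0 \<Rightarrow> 'g) \<Rightarrow> ('g \<Rightarrow> 'n::group_add)
     \<Rightarrow> ('n, 'g, 'm::ab_group_add) C2 \<Rightarrow> ('g, 'm) C1" where
  "sigma \<pi> s0 s1 z = (\<lambda>g. z (s1 (g - s0 (\<pi> g))) (s0 (\<pi> g)) 0)"

definition std where
  "std \<mu> \<pi> aM s0 s1 z = z - d1 \<mu> \<pi> aM (sigma \<pi> s0 s1 z)"

definition Z2st where
  "Z2st act \<mu> \<pi> aM s0 s1 = {z \<in> Z2pt act \<mu> \<pi> aM. std \<mu> \<pi> aM s0 s1 z = z}"
definition B2st where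
  "B2st \<mu> \<pi> aM s0 s1 = {b \<in> B2pt \<mu> \<pi> aM. std \<mu> \<pi> aM s0 s1 b = b}"

definition add_grp :: "'a::ab_group_add set \<Rightarrow> 'a monoid" where
  "add_grp S = \<lparr>carrier = S, mult = (+), one = 0\<rparr>"

definition H2 where "H2 act \<mu> \<pi> aM = add_grp (Z2 act \<mu> \<pi> aM) Mod B2 \<mu> \<pi> aM"
definition H2pt where "H2pt act \<mu> \<pi> aM = add_grp (Z2pt act \<mu> \<pi> aM) Mod B2pt \<mu> \<pi> aM"
definition H2st where
  "H2st act \<mu> \<pi> aM s0 s1 = add_grp (Z2st act \<mu> \<pi> aM s0 s1) Mod B2st \<mu> \<pi> aM s0 s1"

end

theory Submission
  imports Defs
begin
definition subgrp :: "'a::ab_group_add set \<Rightarrow> bool" where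
  "subgrp B \<longleftrightarrow> 0 \<in> B \<and> (\<forall>x\<in>B. \<forall>y\<in>B. x + y \<in> B) \<and> (\<forall>x\<in>B. - x \<in> B)"

lemma subgrp_diff: "subgrp B \<Longrightarrow> x \<in> B \<Longrightarrow> y \<in> B \<Longrightarrow> x - y \<in> B"
  unfolding subgrp_def by (metis diff_conv_add_uminus)

lemma rc_add: "r_coset (add_grp S) H a = (\<lambda>h. h + a) ` H"
  unfolding r_coset_def add_grp_def by auto

lemma sm_add: "set_mult (add_grp S) X Y = {x + y | x y. x \<in> X \<and> y \<in> Y}"
  unfolding set_mult_def add_grp_def by auto

lemma carrier_Mod: "carrier (add_grp S Mod H) = {(\<lambda>h. h + a) ` H | a. a \<in> S}"
  unfolding FactGroup_def RCOSETS_def rc_add by (auto simp: add_grp_def)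

lemma mult_Mod: "mult (add_grp S Mod H) X Y = {x + y | x y. x \<in> X \<and> y \<in> Y}"
  unfolding FactGroup_def by (simp add: sm_add)

lemma coset_eq:
  assumes "subgrp B"
  shows "(\<lambda>h. h + a) ` B = (\<lambda>h. h + c) ` B \<longleftrightarrow> a - c \<in> B"
proof
  assume eq: "(\<lambda>h. h + a) ` B = (\<lambda>h. h + c) ` B"
  have "0 + a \<in> (\<lambda>h. h + a) ` B" using assms unfolding subgrp_def by blast
  then obtain b where "b \<in> B" "a = b + c" using eq by auto
  then show "a - c \<in> B" by simp
next
  assume d: "a - c \<in> B"
  have "- (a - c) \<in> B" using d assms unfolding subgrp_def by blast
  show "(\<lambda>h. h + a) ` B = (\<lambda>h. h + c) ` B"
  proof (rule Set.set_eqI, rule iffI)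
    fix x assume "x \<in> (\<lambda>h. h + a) ` B"
    then obtain b where b: "b \<in> B" "x = b + a" by auto
    have "b + (a - c) \<in> B" using b d assms unfolding subgrp_def by blast
    moreover have "x = (b + (a - c)) + c" using b by simp
    ultimately show "x \<in> (\<lambda>h. h + c) ` B" by blast
  next
    fix x assume "x \<in> (\<lambda>h. h + c) ` B"
    then obtain b where b: "b \<in> B" "x = b + c" by auto
    have "b + - (a - c) \<in> B" using b \<open>- (a - c) \<in> B\<close> assms unfolding subgrp_def by blast
    moreover have "x = (b + - (a - c)) + a" using b by simp
    ultimately show "x \<in> (\<lambda>h. h + a) ` B" by blast
  qed
qed

lemma coset_mult:
  assumes "subgrp B"
  shows "{x + y | x y. x \<in> (\<lambda>h. h + a) ` B \<and> y \<in> (\<lambda>h. h + c) ` B} = (\<lambda>h. h + (a + c)) ` B"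
proof (rule Set.set_eqI, rule iffI)
  fix z assume "z \<in> {x + y | x y. x \<in> (\<lambda>h. h + a) ` B \<and> y \<in> (\<lambda>h. h + c) ` B}"
  then obtain b b' where bb: "b \<in> B" "b' \<in> B" "z = (b + a) + (b' + c)" by auto
  have "b + b' \<in> B" using bb assms unfolding subgrp_def by blast
  moreover have "z = (b + b') + (a + c)" using bb by (simp add: algebra_simps)
  ultimately show "z \<in> (\<lambda>h. h + (a + c)) ` B" by blast
next
  fix z assume "z \<in> (\<lambda>h. h + (a + c)) ` B"
  then obtain b where b: "b \<in> B" "z = b + (a + c)" by auto
  have "0 \<in> B" using assms unfolding subgrp_def by blast
  moreover have "z = (b + a) + (0 + c)" using b by (simp add: algebra_simps)
  ultimately show "z \<in> {x + y | x y. x \<in> (\<lambda>h. h + a) ` B \<and> y \<in> (\<lambda>h. h + c) ` B}"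
    using b by blast
qed

lemma img_iso:
  fixes f :: "'a::ab_group_add \<Rightarrow> 'b::ab_group_add"
  assumes B: "subgrp B" and B': "subgrp B'"
    and Zd: "\<forall>x\<in>Z. \<forall>y\<in>Z. x - y \<in> Z"
    and fadd: "\<forall>x y. f (x + y) = f x + f y"
    and fZ: "f ` Z \<subseteq> Z'" and fB: "f ` B = B'"
    and finj: "\<forall>z\<in>Z. f z \<in> B' \<longrightarrow> z \<in> B"
    and fsurj: "\<forall>z'\<in>Z'. \<exists>z\<in>Z. z' - f z \<in> B'"
  shows "(\<lambda>X. f ` X) \<in> iso (add_grp Z Mod B) (add_grp Z' Mod B')"
proof -
  have fdiff: "f (x - y) = f x - f y" for x y
    using fadd[rule_format, of "x - y" y] by (simp add: algebra_simps)
  have img: "f ` ((\<lambda>h. h + a) ` B) = (\<lambda>h. h + f a) ` B'" for a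
    unfolding fB[symmetric] image_image using fadd by simp
  have hom: "(\<lambda>X. f ` X) \<in> hom (add_grp Z Mod B) (add_grp Z' Mod B')"
    unfolding hom_def
  proof (intro CollectI conjI ballI funcsetI)
    fix X assume "X \<in> carrier (add_grp Z Mod B)"
    then obtain a where "a \<in> Z" "X = (\<lambda>h. h + a) ` B" by (auto simp: carrier_Mod)
    then have "f ` X = (\<lambda>h. h + f a) ` B'" "f a \<in> Z'" using img fZ by auto
    then show "f ` X \<in> carrier (add_grp Z' Mod B')"
      unfolding carrier_Mod by blast
  next
    fix X Y
    show "f ` (X \<otimes>\<^bsub>add_grp Z Mod B\<^esub> Y) = f ` X \<otimes>\<^bsub>add_grp Z' Mod B'\<^esub> f ` Y"
      unfolding mult_Mod
    proof (rule Set.set_eqI, rule iffI)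
      fix u assume "u \<in> f ` {x + y |x y. x \<in> X \<and> y \<in> Y}"
      then obtain x y where xy: "x \<in> X" "y \<in> Y" "u = f (x + y)" by blast
      then show "u \<in> {x + y |x y. x \<in> f ` X \<and> y \<in> f ` Y}" using fadd by auto
    next
      fix u assume "u \<in> {x + y |x y. x \<in> f ` X \<and> y \<in> f ` Y}"
      then obtain x y where xy: "x \<in> X" "y \<in> Y" "u = f x + f y" by blast
      have "x + y \<in> {x + y |x y. x \<in> X \<and> y \<in> Y}" using xy by blast
      then have "f (x + y) \<in> f ` {x + y |x y. x \<in> X \<and> y \<in> Y}" by blast
      then show "u \<in> f ` {x + y |x y. x \<in> X \<and> y \<in> Y}" using xy fadd by simp
    qed
  qed
  have inj: "inj_on (\<lambda>X. f ` X) (carrier (add_grp Z Mod B))"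
  proof (rule inj_onI)
    fix X Y assume X: "X \<in> carrier (add_grp Z Mod B)" and Y: "Y \<in> carrier (add_grp Z Mod B)"
      and eq: "f ` X = f ` Y"
    obtain a where a: "a \<in> Z" "X = (\<lambda>h. h + a) ` B" using X by (auto simp: carrier_Mod)
    obtain c where c: "c \<in> Z" "Y = (\<lambda>h. h + c) ` B" using Y by (auto simp: carrier_Mod)
    have "(\<lambda>h. h + f a) ` B' = (\<lambda>h. h + f c) ` B'" using eq a c img by simp
    then have "f a - f c \<in> B'" by (rule coset_eq[OF B', THEN iffD1])
    then have "f (a - c) \<in> B'" by (simp add: fdiff)
    then have "a - c \<in> B" using finj Zd a c by blast
    then show "X = Y" unfolding a(2) c(2) by (rule coset_eq[OF B, THEN iffD2])
  qed
  have surj: "(\<lambda>X. f ` X) ` carrier (add_grp Z Mod B) = carrier (add_grp Z' Mod B')"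
  proof (rule Set.set_eqI, rule iffI)
    fix Y assume "Y \<in> (\<lambda>X. f ` X) ` carrier (add_grp Z Mod B)"
    then show "Y \<in> carrier (add_grp Z' Mod B')" using hom unfolding hom_def by auto
  next
    fix Y assume "Y \<in> carrier (add_grp Z' Mod B')"
    then obtain a' where a': "a' \<in> Z'" "Y = (\<lambda>h. h + a') ` B'" by (auto simp: carrier_Mod)
    then obtain z where z: "z \<in> Z" "a' - f z \<in> B'" using fsurj by blast
    have "(\<lambda>h. h + a') ` B' = (\<lambda>h. h + f z) ` B'" using z(2) by (rule coset_eq[OF B', THEN iffD2])
    then have "Y = f ` ((\<lambda>h. h + z) ` B)" using a' img by simp
    moreover have "(\<lambda>h. h + z) ` B \<in> carrier (add_grp Z Mod B)" using z by (auto simp: carrier_Mod)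
    ultimately show "Y \<in> (\<lambda>X. f ` X) ` carrier (add_grp Z Mod B)" by blast
  qed
  show ?thesis unfolding iso_def bij_betw_def using hom inj surj by blast
qed

lemma inv_iso:
  assumes h: "h \<in> iso G H"
    and closed: "\<forall>x\<in>carrier G. \<forall>y\<in>carrier G. x \<otimes>\<^bsub>G\<^esub> y \<in> carrier G"
  shows "inv_into (carrier G) h \<in> iso H G"
proof -
  have hh: "h \<in> hom G H" and bij: "bij_betw h (carrier G) (carrier H)" using h unfolding iso_def by auto
  have bij': "bij_betw (inv_into (carrier G) h) (carrier H) (carrier G)"
    by (rule bij_betw_inv_into[OF bij])
  have "inv_into (carrier G) h \<in> hom H G"
    unfolding hom_def
  proof (intro CollectI conjI ballI funcsetI)
    fix X assume "X \<in> carrier H" then show "inv_into (carrier G) h X \<in> carrier G"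
      by (rule bij_betw_apply[OF bij'])
  next
    fix X Y assume X: "X \<in> carrier H" and Y: "Y \<in> carrier H"
    define x where "x = inv_into (carrier G) h X"
    define y where "y = inv_into (carrier G) h Y"
    have xG: "x \<in> carrier G" "y \<in> carrier G" unfolding x_def y_def
      using bij_betw_apply[OF bij'] X Y by auto
    have im: "h ` carrier G = carrier H" using bij by (simp add: bij_betw_def)
    have hx: "h x = X" "h y = Y" unfolding x_def y_def
      using f_inv_into_f[of X h "carrier G"] f_inv_into_f[of Y h "carrier G"] X Y im by auto
    have injh: "inj_on h (carrier G)" using bij by (simp add: bij_betw_def)
    have "h (x \<otimes>\<^bsub>G\<^esub> y) = X \<otimes>\<^bsub>H\<^esub> Y" using hh xG hx unfolding hom_def by auto
    then have "inv_into (carrier G) h (X \<otimes>\<^bsub>H\<^esub> Y) = x \<otimes>\<^bsub>G\<^esub> y"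
      using inv_into_f_f[OF injh, of "x \<otimes>\<^bsub>G\<^esub> y"] closed xG by simp
    then show "inv_into (carrier G) h (X \<otimes>\<^bsub>H\<^esub> Y) =
      inv_into (carrier G) h X \<otimes>\<^bsub>G\<^esub> inv_into (carrier G) h Y" using x_def y_def by simp
  qed
  then show ?thesis unfolding iso_def using bij' by blast
qed

lemma Mod_closed:
  assumes "subgrp B" and "\<forall>x\<in>Z. \<forall>y\<in>Z. x + y \<in> Z"
  shows "\<forall>X\<in>carrier (add_grp Z Mod B). \<forall>Y\<in>carrier (add_grp Z Mod B).
           X \<otimes>\<^bsub>add_grp Z Mod B\<^esub> Y \<in> carrier (add_grp Z Mod B)"
proof (intro ballI)
  fix X Y assume X: "X \<in> carrier (add_grp Z Mod B)" and Y: "Y \<in> carrier (add_grp Z Mod B)"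
  obtain a where a: "a \<in> Z" "X = (\<lambda>h. h + a) ` B" using X by (auto simp: carrier_Mod)
  obtain c where c: "c \<in> Z" "Y = (\<lambda>h. h + c) ` B" using Y by (auto simp: carrier_Mod)
  have "X \<otimes>\<^bsub>add_grp Z Mod B\<^esub> Y = (\<lambda>h. h + (a + c)) ` B"
    unfolding mult_Mod a c by (rule coset_mult[OF assms(1)])
  moreover have "a + c \<in> Z" using a c assms(2) by blast
  ultimately show "X \<otimes>\<^bsub>add_grp Z Mod B\<^esub> Y \<in> carrier (add_grp Z Mod B)"
    unfolding carrier_Mod by blast
qed

lemma hom_zero: "grp_hom (f::'a::group_add \<Rightarrow> 'b::group_add) \<Longrightarrow> f 0 = 0"
  unfolding grp_hom_def by (metis add.right_neutral add_left_cancel)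

lemma hom_diff: "grp_hom (f::'a::group_add \<Rightarrow> 'b::group_add) \<Longrightarrow> f (x - y) = f x - f y"
  unfolding grp_hom_def by (metis add_diff_cancel diff_add_cancel)

lemma grp_aux: "(a::'a::group_add) - k + (k + h) = a + h"
  by (metis add.assoc diff_add_cancel)

locale cme =
  fixes aP1 :: "'p0::group_add \<Rightarrow> 'p1::ab_group_add \<Rightarrow> 'p1"
    and act :: "'g::group_add \<Rightarrow> 'n::group_add \<Rightarrow> 'n"
    and \<mu> :: "'n \<Rightarrow> 'g" and \<iota> :: "'p1 \<Rightarrow> 'n" and \<pi> :: "'g \<Rightarrow> 'p0"
    and aM :: "'p0 \<Rightarrow> 'm::ab_group_add \<Rightarrow> 'm"
    and s0 :: "'p0 \<Rightarrow> 'g" and s1 :: "'g \<Rightarrow> 'n"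
  assumes E: "crossed_module_ext aP1 act \<mu> \<iota> \<pi>"
    and M: "aut_action aM"
    and S: "section_system \<mu> \<pi> s0 s1"
begin

lemma mu_hom: "grp_hom \<mu>" and pi_hom: "grp_hom \<pi>" and actA: "aut_action act"
  and mu_act: "\<mu> (act g m) = g + \<mu> m - g"
  and rng: "range \<mu> = {g. \<pi> g = 0}"
  using E unfolding crossed_module_ext_def crossed_module_def by auto

lemma mu_add[simp]: "\<mu> (x + y) = \<mu> x + \<mu> y" using mu_hom unfolding grp_hom_def by blast
lemma pi_add[simp]: "\<pi> (x + y) = \<pi> x + \<pi> y" using pi_hom unfolding grp_hom_def by blast
lemma mu0[simp]: "\<mu> 0 = 0" using hom_zero[OF mu_hom] .
lemma pi0[simp]: "\<pi> 0 = 0" using hom_zero[OF pi_hom] .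
lemma pi_diff[simp]: "\<pi> (x - y) = \<pi> x - \<pi> y" using hom_diff[OF pi_hom] .
lemma pi_mu[simp]: "\<pi> (\<mu> n) = 0"
proof -
  have "\<mu> n \<in> range \<mu>" by (rule rangeI)
  then show ?thesis using rng by simp
qed
lemma act0[simp]: "act 0 m = m" using actA unfolding aut_action_def by blast
lemma act_add: "act k (x + y) = act k x + act k y" using actA unfolding aut_action_def by blast
lemma act_k0[simp]: "act k 0 = 0"
proof -
  have "act k 0 + act k 0 = act k 0 + 0" using act_add[of k 0 0] by simp
  then show ?thesis by (rule add_left_imp_eq)
qed
lemma aM0[simp]: "aM 0 x = x" using M unfolding aut_action_def by blast
lemma aM_comp: "aM (p + q) x = aM p (aM q x)" using M unfolding aut_action_def by blast
lemma aM_add[simp]: "aM p (x + y) = aM p x + aM p y" using M unfolding aut_action_def by blast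
lemma aM_zero[simp]: "aM p 0 = 0" using aM_add[of p 0 0] by simp
lemma aM_diff[simp]: "aM p (x - y) = aM p x - aM p y" using aM_add[of p "x - y" y] by (simp add: algebra_simps)
lemma aM_uminus[simp]: "aM p (- x) = - aM p x" using aM_diff[of p 0 x] by simp
lemma s00[simp]: "s0 0 = 0" and pis0[simp]: "\<pi> (s0 p) = p" and s10[simp]: "s1 0 = 0"
  using S unfolding section_system_def by auto
lemma mus1: assumes "\<pi> g = 0" shows "\<mu> (s1 g) = g"
proof -
  have "g \<in> range \<mu>" using rng assms by simp
  moreover have "\<forall>x \<in> range \<mu>. \<mu> (s1 x) = x" using S unfolding section_system_def by blast
  ultimately show ?thesis by blast
qed

abbreviation "D1 \<equiv> d1 \<mu> \<pi> aM"
abbreviation "D2 \<equiv> d2 act \<mu> \<pi> aM"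
abbreviation "sg \<equiv> sigma \<pi> s0 s1"
abbreviation "st \<equiv> std \<mu> \<pi> aM s0 s1"
abbreviation "ZZ \<equiv> Z2 act \<mu> \<pi> aM"
abbreviation "BB \<equiv> B2 \<mu> \<pi> aM"
abbreviation "Zpt \<equiv> Z2pt act \<mu> \<pi> aM"
abbreviation "Bpt \<equiv> B2pt \<mu> \<pi> aM"
abbreviation "Zst \<equiv> Z2st act \<mu> \<pi> aM s0 s1"
abbreviation "Bst \<equiv> B2st \<mu> \<pi> aM s0 s1"

lemma d1_add: "D1 (c + c') = D1 c + D1 c'"
  by (simp add: d1_def fun_eq_iff algebra_simps)
lemma d1_diff: "D1 (c - c') = D1 c - D1 c'"
  by (simp add: d1_def fun_eq_iff algebra_simps)
lemma d1_0: "D1 0 = 0"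
  by (simp add: d1_def fun_eq_iff)
lemma d1_uminus: "D1 (- c) = - D1 c"
  using d1_diff[of 0 c] by (simp add: d1_0)
lemma d2_diff: "D2 (c - c') = D2 c - D2 c'"
  by (simp add: d2_def fun_eq_iff algebra_simps)
lemma d2_add: "D2 (c + c') = D2 c + D2 c'"
  by (simp add: d2_def fun_eq_iff algebra_simps)
lemma d2_0: "D2 0 = 0"
  by (simp add: d2_def fun_eq_iff)
lemma sg_add: "sg (z + w) = sg z + sg w"
  by (simp add: sigma_def fun_eq_iff)
lemma sg_diff: "sg (z - w) = sg z - sg w"
  by (simp add: sigma_def fun_eq_iff)
lemma st_add: "st (z + w) = st z + st w"
  by (simp add: std_def sg_add d1_add algebra_simps)
lemma st_diff: "st (z - w) = st z - st w"
  unfolding std_def sg_diff d1_diff by (simp add: algebra_simps)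
lemma st_0: "st 0 = 0"
  by (simp add: std_def sigma_def d1_def fun_eq_iff)
lemma st_uminus: "st (- z) = - st z"
  using st_diff[of 0 z] by (simp add: st_0)
lemma d2_d1: "D2 (D1 c) = 0"
proof -
  have "D2 (D1 c) p n k m h g = 0" for p n k m h g
    unfolding d2_def d1_def
    apply (simp add: mu_act aM_comp add.assoc grp_aux)
    done
  then show ?thesis by (simp add: fun_eq_iff)
qed

lemma cocyc:
  assumes "z \<in> ZZ"
  shows "z p (\<mu> n + k) (\<mu> m + h) - z (p + n) k (h + g) + z (n + act k m) (k + h) g
          - aM (\<pi> k) (z m h g) = 0"
proof -
  have "D2 z = 0" using assms by (simp add: Z2_def)
  then have "D2 z p n k m h g = 0" by simp
  then show ?thesis by (simp add: d2_def)
qed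

lemma z00g: assumes "z \<in> Zpt" shows "z 0 0 g = 0"
proof -
  have "z \<in> ZZ" "z 0 0 0 = 0" using assms by (auto simp: Z2pt_def pointed2_def)
  with cocyc[of z 0 0 0 0 0 g] show ?thesis by simp
qed

lemma z0h0: assumes "z \<in> Zpt" shows "z 0 h 0 = 0"
proof -
  have "z \<in> ZZ" "z 0 0 0 = 0" using assms by (auto simp: Z2pt_def pointed2_def)
  with cocyc[of z 0 0 h 0 0 0] show ?thesis by simp
qed

lemma zn0s: assumes "z \<in> Zpt" shows "z n 0 s = z n 0 0"
proof -
  have "z \<in> ZZ" using assms by (auto simp: Z2pt_def)
  with cocyc[of z n 0 0 0 0 s] z00g[OF assms] show ?thesis by simp
qed

lemma zkey: assumes "z \<in> Zpt" shows "z 0 (\<mu> n) s = z n 0 0 - z n s 0"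
proof -
  have "z \<in> ZZ" using assms by (auto simp: Z2pt_def)
  with cocyc[of z 0 n 0 0 s 0] zn0s[OF assms] z0h0[OF assms] show ?thesis
    by (simp add: algebra_simps)
qed

lemma std_app: "st z m h g = z m h g - (sg z (\<mu> m + h) - sg z (h + g) + aM (\<pi> h) (sg z g))"
  by (simp add: std_def d1_def)

lemma sg_app: "sg z g = z (s1 (g - s0 (\<pi> g))) (s0 (\<pi> g)) 0"
  by (simp add: sigma_def)

lemma partA_M: assumes "z \<in> Zpt" shows "cM (st z) (s1 (\<mu> m)) = 0"
proof -
  have "\<mu> (s1 (\<mu> m)) = \<mu> m" by (rule mus1) simp
  then show ?thesis by (simp add: cM_def std_app sg_app)
qed

lemma partA_G: assumes z: "z \<in> Zpt" shows "cG (st z) (g - s0 (\<pi> g)) (s0 (\<pi> g)) = 0"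
proof -
  define g' where "g' = g - s0 (\<pi> g)"
  define s where "s = s0 (\<pi> g)"
  define n where "n = s1 g'"
  have pg': "\<pi> g' = 0" by (simp add: g'_def)
  have mun: "\<mu> n = g'" unfolding n_def by (rule mus1[OF pg'])
  have gs: "g' + s = g" by (simp add: g'_def s_def)
  have sg1: "sg z g' = z n 0 0" by (simp add: sg_app pg' n_def)
  have sg2: "sg z g = z n s 0" by (simp add: sg_app n_def g'_def s_def)
  have ps: "\<pi> s = \<pi> g" by (simp add: s_def)
  have sg3: "sg z s = 0" by (simp add: sg_app ps z0h0[OF z] flip: s_def)
  have "st z 0 g' s = z 0 g' s - (z n 0 0 - z n s 0)"
    by (simp add: std_app sg1 sg3 gs sg2 pg')
  also have "z 0 g' s = z n 0 0 - z n s 0" using zkey[OF z, of n s] mun by simp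
  finally have "st z 0 g' s = 0" by simp
  then show ?thesis by (simp add: cG_def g'_def s_def)
qed


lemma sg_zero_char:
  assumes z: "z \<in> Zpt" and cm: "\<forall>m. cM z (s1 (\<mu> m)) = 0"
    and cg: "\<forall>g. cG z (g - s0 (\<pi> g)) (s0 (\<pi> g)) = 0"
  shows "sg z = 0"
proof
  fix g
  define g' where "g' = g - s0 (\<pi> g)"
  define s where "s = s0 (\<pi> g)"
  define n where "n = s1 g'"
  have pg': "\<pi> g' = 0" by (simp add: g'_def)
  have mun: "\<mu> n = g'" unfolding n_def by (rule mus1[OF pg'])
  have sg2: "sg z g = z n s 0" by (simp add: sg_app n_def g'_def s_def)
  have "z 0 g' s = z n 0 0 - z n s 0" using zkey[OF z, of n s] mun by simp
  moreover have "z 0 g' s = 0" using cg unfolding cG_def g'_def s_def by blast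
  moreover have "z n 0 0 = 0" using cm[rule_format, of n] mun unfolding cM_def n_def by simp
  ultimately have "z n s 0 = 0" by simp
  then show "sg z g = 0 g" using sg2 by simp
qed

lemma ZZ_diff: "z \<in> ZZ \<Longrightarrow> w \<in> ZZ \<Longrightarrow> z - w \<in> ZZ"
  by (simp add: Z2_def d2_diff)
lemma ZZ_add: "z \<in> ZZ \<Longrightarrow> w \<in> ZZ \<Longrightarrow> z + w \<in> ZZ"
  by (simp add: Z2_def d2_add)
lemma BB_ZZ: "D1 c \<in> ZZ"
  by (simp add: Z2_def d2_d1)

lemma st_pt: "z \<in> Zpt \<Longrightarrow> pointed2 (st z)"
  by (simp add: Z2pt_def pointed2_def std_app sg_app)

lemma st_Z: "z \<in> ZZ \<Longrightarrow> st z \<in> ZZ"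
  unfolding std_def by (rule ZZ_diff) (auto intro: BB_ZZ)

lemma Zst_char: "Zst = {z \<in> Zpt. (\<forall>m. cM z (s1 (\<mu> m)) = 0)
                               \<and> (\<forall>g. cG z (g - s0 (\<pi> g)) (s0 (\<pi> g)) = 0)}"
proof (rule Set.set_eqI, rule iffI)
  fix z assume "z \<in> Zst"
  then have z: "z \<in> Zpt" and e: "st z = z" by (auto simp: Z2st_def)
  show "z \<in> {z \<in> Zpt. (\<forall>m. cM z (s1 (\<mu> m)) = 0)
                               \<and> (\<forall>g. cG z (g - s0 (\<pi> g)) (s0 (\<pi> g)) = 0)}"
    using partA_M[OF z] partA_G[OF z] z e by simp
next
  fix z assume "z \<in> {z \<in> Zpt. (\<forall>m. cM z (s1 (\<mu> m)) = 0)
                               \<and> (\<forall>g. cG z (g - s0 (\<pi> g)) (s0 (\<pi> g)) = 0)}"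
  then have z: "z \<in> Zpt" and "sg z = 0" using sg_zero_char by auto
  then have "st z = z" by (simp add: std_def d1_0)
  then show "z \<in> Zst" using z by (simp add: Z2st_def)
qed

lemma st_in_Zst: assumes z: "z \<in> Zpt" shows "st z \<in> Zst"
proof -
  have "st z \<in> Zpt" using z st_pt st_Z by (simp add: Z2pt_def)
  then show ?thesis unfolding Zst_char using partA_M[OF z] partA_G[OF z] by simp
qed

lemma st_st: "z \<in> Zpt \<Longrightarrow> st (st z) = st z"
  using st_in_Zst by (simp add: Z2st_def)


lemma Bpt_Zpt: "Bpt \<subseteq> Zpt"
  by (auto simp: B2pt_def Z2pt_def B2_def BB_ZZ)

lemma Bst_Bpt: "Bst \<subseteq> Bpt" by (auto simp: B2st_def)

lemma subgrp_BB: "subgrp BB"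
  unfolding subgrp_def B2_def
proof (intro conjI ballI)
  show "0 \<in> range D1" using d1_0 by (metis rangeI)
next
  fix x y assume "x \<in> range D1" "y \<in> range D1"
  then obtain c c' where "x = D1 c" "y = D1 c'" by blast
  then have "x + y = D1 (c + c')" by (simp add: d1_add)
  then show "x + y \<in> range D1" by simp
next
  fix x assume "x \<in> range D1"
  then obtain c where "x = D1 c" by blast
  then have "- x = D1 (- c)" by (simp add: d1_uminus)
  then show "- x \<in> range D1" by simp
qed

lemma pt_add: "pointed2 z \<Longrightarrow> pointed2 w \<Longrightarrow> pointed2 (z + w)"
  by (simp add: pointed2_def)
lemma pt_uminus: "pointed2 z \<Longrightarrow> pointed2 (- z)"
  by (simp add: pointed2_def)
lemma pt_diff: "pointed2 z \<Longrightarrow> pointed2 w \<Longrightarrow> pointed2 (z - w)"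
  by (simp add: pointed2_def)
lemma pt_0: "pointed2 0"
  by (simp add: pointed2_def)

lemma subgrp_Bpt: "subgrp Bpt"
  using subgrp_BB unfolding subgrp_def B2pt_def
  by (auto intro: pt_add pt_uminus pt_0)

lemma subgrp_Bst: "subgrp Bst"
  using subgrp_Bpt unfolding subgrp_def B2st_def
  by (auto simp: st_add st_uminus st_0)

lemma Zpt_diff: "z \<in> Zpt \<Longrightarrow> w \<in> Zpt \<Longrightarrow> z - w \<in> Zpt"
  by (auto simp: Z2pt_def ZZ_diff pt_diff)
lemma Zpt_add: "z \<in> Zpt \<Longrightarrow> w \<in> Zpt \<Longrightarrow> z + w \<in> Zpt"
  by (auto simp: Z2pt_def ZZ_add pt_add)
lemma Zst_diff: "z \<in> Zst \<Longrightarrow> w \<in> Zst \<Longrightarrow> z - w \<in> Zst"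
  by (auto simp: Z2st_def Zpt_diff st_diff)
lemma Zst_add: "z \<in> Zst \<Longrightarrow> w \<in> Zst \<Longrightarrow> z + w \<in> Zst"
  by (auto simp: Z2st_def Zpt_add st_add)

lemma st_Bpt: assumes b: "b \<in> Bpt" shows "st b \<in> Bst"
proof -
  obtain c where c: "b = D1 c" using b by (auto simp: B2pt_def B2_def)
  have "st b = D1 (c - sg b)" by (simp add: std_def c d1_diff)
  then have "st b \<in> BB" by (simp add: B2_def)
  moreover have bz: "b \<in> Zpt" using b Bpt_Zpt by blast
  ultimately show ?thesis using st_pt[OF bz] st_st[OF bz] by (simp add: B2st_def B2pt_def)
qed

lemma st_img_Bpt: "st ` Bpt = Bst"
proof
  show "st ` Bpt \<subseteq> Bst" using st_Bpt by blast
  show "Bst \<subseteq> st ` Bpt"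
  proof
    fix b assume "b \<in> Bst"
    then have "b \<in> Bpt" "st b = b" by (auto simp: B2st_def)
    then show "b \<in> st ` Bpt" by (metis imageI)
  qed
qed

lemma st_inj: assumes z: "z \<in> Zpt" and s: "st z \<in> Bst" shows "z \<in> Bpt"
proof -
  obtain c where c: "st z = D1 c" using s by (auto simp: B2st_def B2pt_def B2_def)
  have "z = st z + D1 (sg z)" by (simp add: std_def)
  also have "\<dots> = D1 (c + sg z)" by (simp add: c d1_add)
  finally have "z \<in> BB" by (simp add: B2_def)
  then show ?thesis using z by (simp add: B2pt_def Z2pt_def)
qed

definition P where "P z = z - D1 (\<lambda>_. z 0 0 0)"

lemma P_add: "P (z + w) = P z + P w"
proof -
  have "(\<lambda>_::'g. (z + w) 0 0 0) = (\<lambda>_. z 0 0 0) + (\<lambda>_. w 0 0 0)" by (simp add: fun_eq_iff)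
  then show ?thesis unfolding P_def by (simp add: d1_add algebra_simps)
qed

lemma P_pt: "pointed2 (P z)"
  by (simp add: P_def pointed2_def d1_def)

lemma P_Z: "z \<in> ZZ \<Longrightarrow> P z \<in> Zpt"
  unfolding Z2pt_def using P_pt by (auto simp: P_def intro: ZZ_diff BB_ZZ)

lemma P_id: "pointed2 z \<Longrightarrow> P z = z"
proof -
  assume "pointed2 z"
  then have "(\<lambda>_::'g. z 0 0 0) = 0" by (simp add: pointed2_def fun_eq_iff)
  then show "P z = z" by (simp add: P_def d1_0)
qed

lemma P_B: assumes "b \<in> BB" shows "P b \<in> Bpt"
proof -
  obtain c where c: "b = D1 c" using assms by (auto simp: B2_def)
  have "P b = D1 (c - (\<lambda>_. b 0 0 0))" by (simp add: P_def c d1_diff)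
  then show ?thesis using P_pt[of b] by (simp add: B2pt_def B2_def)
qed


lemma rc_mem: "z \<in> S \<Longrightarrow> r_coset (add_grp S) H z \<in> carrier (add_grp S Mod H)"
  unfolding carrier_Mod rc_add by blast

lemma psi_img: "st ` r_coset (add_grp Zpt) Bpt z = r_coset (add_grp Zst) Bst (st z)"
proof -
  have "st ` ((\<lambda>h. h + z) ` Bpt) = (\<lambda>h. h + st z) ` (st ` Bpt)"
    by (simp add: image_image st_add)
  then show ?thesis unfolding rc_add st_img_Bpt .
qed

lemma Zst_Zpt: "Zst \<subseteq> Zpt" by (auto simp: Z2st_def)

lemma psi_iso: "(\<lambda>X. st ` X) \<in> iso (H2pt act \<mu> \<pi> aM) (H2st act \<mu> \<pi> aM s0 s1)"
  unfolding H2pt_def H2st_def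
proof (rule img_iso[OF subgrp_Bpt subgrp_Bst])
  show "\<forall>x\<in>Zpt. \<forall>y\<in>Zpt. x - y \<in> Zpt" using Zpt_diff by blast
  show "\<forall>x y. st (x + y) = st x + st y" using st_add by blast
  show "st ` Zpt \<subseteq> Zst" using st_in_Zst by blast
  show "st ` Bpt = Bst" by (rule st_img_Bpt)
  show "\<forall>z\<in>Zpt. st z \<in> Bst \<longrightarrow> z \<in> Bpt" using st_inj by blast
  show "\<forall>z'\<in>Zst. \<exists>z\<in>Zpt. z' - st z \<in> Bst"
  proof
    fix z' assume z': "z' \<in> Zst"
    then have "z' \<in> Zpt" "st z' = z'" by (auto simp: Z2st_def)
    moreover have "0 \<in> Bst" using subgrp_Bst by (simp add: subgrp_def)
    ultimately show "\<exists>z\<in>Zpt. z' - st z \<in> Bst" by (intro bexI[of _ z']) simp_all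
  qed
qed

lemma partC:
  "\<exists>\<phi> \<psi>.
         \<phi> \<in> iso (H2st act \<mu> \<pi> aM s0 s1) (H2pt act \<mu> \<pi> aM)
       \<and> \<psi> \<in> iso (H2pt act \<mu> \<pi> aM) (H2st act \<mu> \<pi> aM s0 s1)
       \<and> (\<forall>z \<in> Z2st act \<mu> \<pi> aM s0 s1.
            \<phi> (r_coset (add_grp (Z2st act \<mu> \<pi> aM s0 s1)) (B2st \<mu> \<pi> aM s0 s1) z)
              = r_coset (add_grp (Z2pt act \<mu> \<pi> aM)) (B2pt \<mu> \<pi> aM) z)
       \<and> (\<forall>z \<in> Z2pt act \<mu> \<pi> aM.
            \<psi> (r_coset (add_grp (Z2pt act \<mu> \<pi> aM)) (B2pt \<mu> \<pi> aM) z)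
              = r_coset (add_grp (Z2st act \<mu> \<pi> aM s0 s1)) (B2st \<mu> \<pi> aM s0 s1)
                  (std \<mu> \<pi> aM s0 s1 z))
       \<and> (\<forall>X \<in> carrier (H2st act \<mu> \<pi> aM s0 s1). \<psi> (\<phi> X) = X)
       \<and> (\<forall>Y \<in> carrier (H2pt act \<mu> \<pi> aM). \<phi> (\<psi> Y) = Y)"
proof -
  define \<psi> where "\<psi> = (\<lambda>X. st ` X)"
  define \<phi> where "\<phi> = inv_into (carrier (H2pt act \<mu> \<pi> aM)) \<psi>"
  have psi: "\<psi> \<in> iso (H2pt act \<mu> \<pi> aM) (H2st act \<mu> \<pi> aM s0 s1)"
    unfolding \<psi>_def by (rule psi_iso)
  have closed: "\<forall>x\<in>carrier (H2pt act \<mu> \<pi> aM). \<forall>y\<in>carrier (H2pt act \<mu> \<pi> aM).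
       x \<otimes>\<^bsub>H2pt act \<mu> \<pi> aM\<^esub> y \<in> carrier (H2pt act \<mu> \<pi> aM)"
    unfolding H2pt_def by (rule Mod_closed[OF subgrp_Bpt]) (use Zpt_add in blast)
  have phi: "\<phi> \<in> iso (H2st act \<mu> \<pi> aM s0 s1) (H2pt act \<mu> \<pi> aM)"
    unfolding \<phi>_def by (rule inv_iso[OF psi closed])
  have bij: "bij_betw \<psi> (carrier (H2pt act \<mu> \<pi> aM)) (carrier (H2st act \<mu> \<pi> aM s0 s1))"
    using psi by (simp add: iso_def)
  then have inj: "inj_on \<psi> (carrier (H2pt act \<mu> \<pi> aM))"
    and im: "\<psi> ` carrier (H2pt act \<mu> \<pi> aM) = carrier (H2st act \<mu> \<pi> aM s0 s1)"
    by (auto simp: bij_betw_def)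
  have psi_rc: "\<forall>z \<in> Zpt. \<psi> (r_coset (add_grp Zpt) Bpt z) = r_coset (add_grp Zst) Bst (st z)"
    unfolding \<psi>_def using psi_img by blast
  have phi_rc: "\<forall>z \<in> Zst. \<phi> (r_coset (add_grp Zst) Bst z) = r_coset (add_grp Zpt) Bpt z"
  proof
    fix z assume z: "z \<in> Zst"
    then have zp: "z \<in> Zpt" and e: "st z = z" by (auto simp: Z2st_def)
    have m: "r_coset (add_grp Zpt) Bpt z \<in> carrier (H2pt act \<mu> \<pi> aM)"
      unfolding H2pt_def by (rule rc_mem[OF zp])
    have "r_coset (add_grp Zst) Bst z = \<psi> (r_coset (add_grp Zpt) Bpt z)"
      using psi_rc zp e by simp
    then show "\<phi> (r_coset (add_grp Zst) Bst z) = r_coset (add_grp Zpt) Bpt z"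
      unfolding \<phi>_def using inv_into_f_f[OF inj m] by simp
  qed
  have pf: "\<forall>X \<in> carrier (H2st act \<mu> \<pi> aM s0 s1). \<psi> (\<phi> X) = X"
  proof
    fix X assume "X \<in> carrier (H2st act \<mu> \<pi> aM s0 s1)"
    then have "X \<in> \<psi> ` carrier (H2pt act \<mu> \<pi> aM)" by (simp add: im)
    then show "\<psi> (\<phi> X) = X" unfolding \<phi>_def by (rule f_inv_into_f)
  qed
  have fp: "\<forall>Y \<in> carrier (H2pt act \<mu> \<pi> aM). \<phi> (\<psi> Y) = Y"
  proof
    fix Y assume "Y \<in> carrier (H2pt act \<mu> \<pi> aM)"
    then show "\<phi> (\<psi> Y) = Y" unfolding \<phi>_def by (rule inv_into_f_f[OF inj])
  qed
  show ?thesis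
    apply (rule exI[of _ \<phi>], rule exI[of _ \<psi>])
    apply (intro conjI)
    using phi psi phi_rc psi_rc pf fp by simp_all
qed

lemma partD: "H2 act \<mu> \<pi> aM \<cong> H2st act \<mu> \<pi> aM s0 s1"
proof (rule is_isoI)
  show "(\<lambda>X. (\<lambda>z. st (P z)) ` X) \<in> iso (H2 act \<mu> \<pi> aM) (H2st act \<mu> \<pi> aM s0 s1)"
    unfolding H2_def H2st_def
  proof (rule img_iso[OF subgrp_BB subgrp_Bst])
    show "\<forall>x\<in>ZZ. \<forall>y\<in>ZZ. x - y \<in> ZZ" using ZZ_diff by blast
    show "\<forall>x y. st (P (x + y)) = st (P x) + st (P y)" by (simp add: P_add st_add)
    show "(\<lambda>z. st (P z)) ` ZZ \<subseteq> Zst" using st_in_Zst P_Z by blast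
    show "(\<lambda>z. st (P z)) ` BB = Bst"
    proof
      show "(\<lambda>z. st (P z)) ` BB \<subseteq> Bst" using st_Bpt P_B by blast
      show "Bst \<subseteq> (\<lambda>z. st (P z)) ` BB"
      proof
        fix b assume "b \<in> Bst"
        then have "b \<in> BB" "pointed2 b" "st b = b" by (auto simp: B2st_def B2pt_def)
        then have "b = st (P b)" using P_id by simp
        then show "b \<in> (\<lambda>z. st (P z)) ` BB" using \<open>b \<in> BB\<close> by (rule image_eqI)
      qed
    qed
    show "\<forall>z\<in>ZZ. st (P z) \<in> Bst \<longrightarrow> z \<in> BB"
    proof (intro ballI impI)
      fix z assume z: "z \<in> ZZ" and s: "st (P z) \<in> Bst"
      have "P z \<in> Bpt" by (rule st_inj[OF P_Z[OF z] s])
      then obtain c where c: "P z = D1 c" by (auto simp: B2pt_def B2_def)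
      have "z = P z + D1 (\<lambda>_. z 0 0 0)" by (simp add: P_def)
      also have "\<dots> = D1 (c + (\<lambda>_. z 0 0 0))" by (simp add: c d1_add)
      finally show "z \<in> BB" by (simp add: B2_def)
    qed
    show "\<forall>z'\<in>Zst. \<exists>z\<in>ZZ. z' - st (P z) \<in> Bst"
    proof
      fix z' assume z': "z' \<in> Zst"
      then have "z' \<in> ZZ" "pointed2 z'" "st z' = z'" by (auto simp: Z2st_def Z2pt_def)
      moreover have "0 \<in> Bst" using subgrp_Bst by (simp add: subgrp_def)
      ultimately show "\<exists>z\<in>ZZ. z' - st (P z) \<in> Bst" using P_id by (intro bexI[of _ z']) simp_all
    qed
  qed
qed

end

theorem corollary4p5:
  fixes aP1 :: "'p0::group_add \<Rightarrow> 'p1::ab_group_add \<Rightarrow> 'p1"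
    and act :: "'g::group_add \<Rightarrow> 'n::group_add \<Rightarrow> 'n"
    and \<mu> :: "'n \<Rightarrow> 'g" and \<iota> :: "'p1 \<Rightarrow> 'n" and \<pi> :: "'g \<Rightarrow> 'p0"
    and aM :: "'p0 \<Rightarrow> 'm::ab_group_add \<Rightarrow> 'm"
    and s0 :: "'p0 \<Rightarrow> 'g" and s1 :: "'g \<Rightarrow> 'n"
  assumes E: "crossed_module_ext aP1 act \<mu> \<iota> \<pi>"
    and M: "aut_action aM"
    and S: "section_system \<mu> \<pi> s0 s1"
  shows
    \<comment> \<open>(a)\<close>
    "(\<forall>z \<in> Z2pt act \<mu> \<pi> aM.
        (\<forall>m. cM (std \<mu> \<pi> aM s0 s1 z) (s1 (\<mu> m)) = 0)
      \<and> (\<forall>g. cG (std \<mu> \<pi> aM s0 s1 z) (g - s0 (\<pi> g)) (s0 (\<pi> g)) = 0))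
    \<comment> \<open>(b)\<close>
    \<and> Z2st act \<mu> \<pi> aM s0 s1 =
        {z \<in> Z2pt act \<mu> \<pi> aM. (\<forall>m. cM z (s1 (\<mu> m)) = 0)
                               \<and> (\<forall>g. cG z (g - s0 (\<pi> g)) (s0 (\<pi> g)) = 0)}
    \<and> (\<forall>z \<in> Z2pt act \<mu> \<pi> aM. std \<mu> \<pi> aM s0 s1 z \<in> Z2st act \<mu> \<pi> aM s0 s1)
    \<comment> \<open>(c)\<close>
    \<and> (\<exists>\<phi> \<psi>.
         \<phi> \<in> iso (H2st act \<mu> \<pi> aM s0 s1) (H2pt act \<mu> \<pi> aM)
       \<and> \<psi> \<in> iso (H2pt act \<mu> \<pi> aM) (H2st act \<mu> \<pi> aM s0 s1)
       \<and> (\<forall>z \<in> Z2st act \<mu> \<pi> aM s0 s1.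
            \<phi> (r_coset (add_grp (Z2st act \<mu> \<pi> aM s0 s1)) (B2st \<mu> \<pi> aM s0 s1) z)
              = r_coset (add_grp (Z2pt act \<mu> \<pi> aM)) (B2pt \<mu> \<pi> aM) z)
       \<and> (\<forall>z \<in> Z2pt act \<mu> \<pi> aM.
            \<psi> (r_coset (add_grp (Z2pt act \<mu> \<pi> aM)) (B2pt \<mu> \<pi> aM) z)
              = r_coset (add_grp (Z2st act \<mu> \<pi> aM s0 s1)) (B2st \<mu> \<pi> aM s0 s1)
                  (std \<mu> \<pi> aM s0 s1 z))
       \<and> (\<forall>X \<in> carrier (H2st act \<mu> \<pi> aM s0 s1). \<psi> (\<phi> X) = X)
       \<and> (\<forall>Y \<in> carrier (H2pt act \<mu> \<pi> aM). \<phi> (\<psi> Y) = Y))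
    \<and> H2 act \<mu> \<pi> aM \<cong> H2st act \<mu> \<pi> aM s0 s1"
proof -
  interpret c: cme aP1 act \<mu> \<iota> \<pi> aM s0 s1 by (rule cme.intro[OF E M S])
  show ?thesis
    apply (intro conjI)
    subgoal using c.partA_M c.partA_G by simp
    subgoal by (rule c.Zst_char)
    subgoal using c.st_in_Zst by simp
    subgoal by (rule c.partC)
    subgoal by (rule c.partD)
    done
qed

end
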